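(* Let $X$ be an infinite set with a metric $d$ inducing the discrete topology and having bounded geometry, equipped with the counting measure. Let $\xi$ be a filter on $X$ and $T\in\mathscr{E}(X)$. Then $$T\in\mathscr{G}_\xi(X)\iff\lim_{x\to\xi}\ \sup_{y,z\in B_x(r)}|\langle y,Tz\rangle|=0\ \text{for all } r>0.$$ Moreover, if $\xi$ is coarse, then $\mathscr{G}_\xi(X)=\{T\in\mathscr{E}(X):\lim_{x,y\to\xi}\langle x,Ty\rangle=0\}$.
   Context: Bounded geometry: for every $r>0$ the number of points of $B_x(r)=\{y:d(x,y)\le r\}$ is bounded by a constant independent of $x$. $L^2(X)=\ell^2(X)$ and each $x\in X$ is identified with the basis vector $\mathbf{1}_{\{x\}}$, so $\langle x,Ty\rangle$ is the matrix coefficient of $T$. $\mathbf{1}_A$ is multiplication by the characteristic function of $A$. A kernel $k$ on $X\times X$ is controlled if $k(x,y)=0$ whenever $d(x,y)>r$ for some $r$; $\mathscr{E}(X)$ is the norm closure of the operators $(Op(k)f)(x)=\sum_y k(x,y)f(y)$ with $k$ bounded, uniformly continuous and controlled. For a filter $\xi$, $\lim_{x\to\xi}f(x)=0$ means $\{x:|f(x)|<\varepsilon\}\in\xi$ for each $\varepsilon>0$, and $\lim_{x,y\to\xi}g(x,y)=0$ means that for each $\varepsilon>0$ there is $F\in\xi$ with $|g(x,y)|<\varepsilon$ for all $x,y\in F$. $\mathscr{G}_\xi(X)=\{T\in\mathscr{E}(X):\lim_{x\to\xi}\|\mathbf{1}_{B_x(r)}T\|=0\ \forall r>0\}$. With $F^{(r)}=\{x:\inf_{y\notin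 F}d(x,y)>r\}$, $\xi$ is coarse if $F\in\xi\Rightarrow F^{(r)}\in\xi$ for all $r>0$. *)

theory Defs
  imports "HOL-Analysis.Analysis"
begin

text \<open>The space X is the universe of the type 'a, with metric d; L2(X) = l2(X) for the counting measure.
Operators are maps on functions 'a => complex; only their action on l2 matters.\<close>

definition metric_on :: "('a \<Rightarrow> 'a \<Rightarrow> real) \<Rightarrow> bool" where
  "metric_on d \<longleftrightarrow> (\<forall>x y. d x y \<ge> 0) \<and> (\<forall>x y. d x y = 0 \<longleftrightarrow> x = y)
     \<and> (\<forall>x y. d x y = d y x) \<and> (\<forall>x y z. d x z \<le> d x y + d y z)"

definition discrete_metric :: "('a \<Rightarrow> 'a \<Rightarrow> real) \<Rightarrow> bool" where
  "discrete_metric d \<longleftrightarrow> (\<forall>x. \<exists>e>0. \<forall>y. d x y < e \<longrightarrow> y = x)"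

definition cball_d :: "('a \<Rightarrow> 'a \<Rightarrow> real) \<Rightarrow> 'a \<Rightarrow> real \<Rightarrow> 'a set" where
  "cball_d d x r = {y. d x y \<le> r}"

definition bounded_geometry :: "('a \<Rightarrow> 'a \<Rightarrow> real) \<Rightarrow> bool" where
  "bounded_geometry d \<longleftrightarrow> (\<forall>r>0. \<exists>N::nat. \<forall>x. finite (cball_d d x r) \<and> card (cball_d d x r) \<le> N)"

definition ell2 :: "('a \<Rightarrow> complex) set" where
  "ell2 = {f. (\<lambda>x. (cmod (f x))\<^sup>2) summable_on UNIV}"

definition norm2 :: "('a \<Rightarrow> complex) \<Rightarrow> real" where
  "norm2 f = sqrt (\<Sum>\<^sub>\<infinity>x. (cmod (f x))\<^sup>2)"

definition bounded_op :: "(('a \<Rightarrow> complex) \<Rightarrow> ('a \<Rightarrow> complex)) \<Rightarrow> bool" where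
  "bounded_op T \<longleftrightarrow> (\<forall>f\<in>ell2. T f \<in> ell2)
     \<and> (\<forall>f\<in>ell2. \<forall>g\<in>ell2. T (\<lambda>x. f x + g x) = (\<lambda>x. T f x + T g x))
     \<and> (\<forall>f\<in>ell2. \<forall>c::complex. T (\<lambda>x. c * f x) = (\<lambda>x. c * T f x))
     \<and> (\<exists>C. \<forall>f\<in>ell2. norm2 (T f) \<le> C * norm2 f)"

definition opnorm :: "(('a \<Rightarrow> complex) \<Rightarrow> ('a \<Rightarrow> complex)) \<Rightarrow> real" where
  "opnorm T = Sup {norm2 (T f) | f. f \<in> ell2 \<and> norm2 f \<le> 1}"

definition mult_op :: "'a set \<Rightarrow> (('a \<Rightarrow> complex) \<Rightarrow> ('a \<Rightarrow> complex)) \<Rightarrow> (('a \<Rightarrow> complex) \<Rightarrow> ('a \<Rightarrow> complex))" where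
  "mult_op A T = (\<lambda>f x. indicator A x * T f x)"

definition coeff :: "(('a \<Rightarrow> complex) \<Rightarrow> ('a \<Rightarrow> complex)) \<Rightarrow> 'a \<Rightarrow> 'a \<Rightarrow> complex" where
  "coeff T x y = T (indicator {y}) x"

definition Op :: "('a \<Rightarrow> 'a \<Rightarrow> complex) \<Rightarrow> ('a \<Rightarrow> complex) \<Rightarrow> ('a \<Rightarrow> complex)" where
  "Op k f = (\<lambda>x. \<Sum>\<^sub>\<infinity>y. k x y * f y)"

definition bounded_kernel :: "('a \<Rightarrow> 'a \<Rightarrow> complex) \<Rightarrow> bool" where
  "bounded_kernel k \<longleftrightarrow> (\<exists>C. \<forall>x y. cmod (k x y) \<le> C)"

definition unif_cont_kernel :: "('a \<Rightarrow> 'a \<Rightarrow> real) \<Rightarrow> ('a \<Rightarrow> 'a \<Rightarrow> complex) \<Rightarrow> bool" where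
  "unif_cont_kernel d k \<longleftrightarrow> (\<forall>e>0. \<exists>\<delta>>0. \<forall>x y x' y'.
      d x x' < \<delta> \<longrightarrow> d y y' < \<delta> \<longrightarrow> cmod (k x y - k x' y') < e)"

definition controlled_kernel :: "('a \<Rightarrow> 'a \<Rightarrow> real) \<Rightarrow> ('a \<Rightarrow> 'a \<Rightarrow> complex) \<Rightarrow> bool" where
  "controlled_kernel d k \<longleftrightarrow> (\<exists>r. \<forall>x y. d x y > r \<longrightarrow> k x y = 0)"

definition E_alg :: "('a \<Rightarrow> 'a \<Rightarrow> real) \<Rightarrow> (('a \<Rightarrow> complex) \<Rightarrow> ('a \<Rightarrow> complex)) set" where
  "E_alg d = {T. bounded_op T \<and> (\<forall>e>0. \<exists>k. bounded_kernel k \<and> unif_cont_kernel d k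
      \<and> controlled_kernel d k \<and> opnorm (\<lambda>f x. T f x - Op k f x) < e)}"

definition G_alg :: "('a \<Rightarrow> 'a \<Rightarrow> real) \<Rightarrow> 'a filter \<Rightarrow> (('a \<Rightarrow> complex) \<Rightarrow> ('a \<Rightarrow> complex)) set" where
  "G_alg d \<xi> = {T \<in> E_alg d. \<forall>r>0. ((\<lambda>x. opnorm (mult_op (cball_d d x r) T)) \<longlongrightarrow> 0) \<xi>}"

definition lim2_zero :: "'a filter \<Rightarrow> ('a \<Rightarrow> 'a \<Rightarrow> complex) \<Rightarrow> bool" where
  "lim2_zero \<xi> g \<longleftrightarrow> (\<forall>e>0. \<exists>F. eventually (\<lambda>x. x \<in> F) \<xi> \<and> (\<forall>x\<in>F. \<forall>y\<in>F. cmod (g x y) < e))"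

text \<open>F^(r) = {x. inf_{y notin F} d(x,y) > r}, with inf of the empty set = +infinity.\<close>
definition interior_r :: "('a \<Rightarrow> 'a \<Rightarrow> real) \<Rightarrow> 'a set \<Rightarrow> real \<Rightarrow> 'a set" where
  "interior_r d F r = {x. \<exists>s>r. \<forall>y. y \<notin> F \<longrightarrow> d x y \<ge> s}"

definition coarse_filter :: "('a \<Rightarrow> 'a \<Rightarrow> real) \<Rightarrow> 'a filter \<Rightarrow> bool" where
  "coarse_filter d \<xi> \<longleftrightarrow> (\<forall>F. eventually (\<lambda>x. x \<in> F) \<xi> \<longrightarrow>
      (\<forall>r>0. eventually (\<lambda>x. x \<in> interior_r d F r) \<xi>))"

end

theory Submission
  imports Defs
begin

lemma ell2_finI:
  fixes g :: "'a \<Rightarrow> complex"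
  assumes "\<And>F. finite F \<Longrightarrow> (\<Sum>x\<in>F. (cmod (g x))^2) \<le> B"
  shows "g \<in> ell2" "norm2 g \<le> sqrt B"
proof -
  have s: "(\<lambda>x. (cmod (g x))\<^sup>2) summable_on UNIV"
    by (rule nonneg_bdd_above_summable_on) (auto intro!: bdd_aboveI[where M=B] assms)
  then show "g \<in> ell2" by (simp add: ell2_def)
  have "(\<Sum>\<^sub>\<infinity>x. (cmod (g x))\<^sup>2) \<le> B"
    by (rule infsum_le_finite_sums[OF s]) (use assms in auto)
  then show "norm2 g \<le> sqrt B" by (simp add: norm2_def)
qed

lemma ell2_sum_le:
  fixes g :: "'a \<Rightarrow> complex"
  assumes "g \<in> ell2" "finite A"
  shows "(\<Sum>x\<in>A. (cmod (g x))^2) \<le> (norm2 g)^2"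
proof -
  have s: "(\<lambda>x. (cmod (g x))\<^sup>2) summable_on UNIV" using assms by (simp add: ell2_def)
  have "(\<Sum>x\<in>A. (cmod (g x))^2) \<le> (\<Sum>\<^sub>\<infinity>x. (cmod (g x))\<^sup>2)"
    by (rule finite_sum_le_infsum[OF s assms(2)]) auto
  moreover have "0 \<le> (\<Sum>\<^sub>\<infinity>x. (cmod (g x))\<^sup>2)" by (simp add: infsum_nonneg)
  ultimately show ?thesis by (simp add: norm2_def)
qed

lemma norm2_nonneg: "0 \<le> norm2 g" by (simp add: norm2_def infsum_nonneg)

lemma ell2_pt_le:
  fixes g :: "'a \<Rightarrow> complex"
  assumes "g \<in> ell2"
  shows "cmod (g x) \<le> norm2 g"
proof -
  have "(cmod (g x))^2 \<le> (norm2 g)^2" using ell2_sum_le[OF assms, of "{x}"] by simp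
  then show ?thesis using norm2_nonneg[of g] by (simp add: power2_le_iff_abs_le)
qed

lemma ell2_fin_supp:
  fixes g :: "'a \<Rightarrow> complex"
  assumes "finite A" "\<And>x. x \<notin> A \<Longrightarrow> g x = 0"
  shows "g \<in> ell2" "norm2 g = sqrt (\<Sum>x\<in>A. (cmod (g x))^2)"
proof -
  have *: "(\<Sum>x\<in>F. (cmod (g x))^2) \<le> (\<Sum>x\<in>A. (cmod (g x))^2)" if "finite F" for F
  proof -
    have "(\<Sum>x\<in>F. (cmod (g x))^2) = (\<Sum>x\<in>F \<inter> A. (cmod (g x))^2)"
      by (rule sum.mono_neutral_right) (use that assms in auto)
    also have "\<dots> \<le> (\<Sum>x\<in>A. (cmod (g x))^2)"
      by (rule sum_mono2) (use assms in auto)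
    finally show ?thesis .
  qed
  then show "g \<in> ell2" by (rule ell2_finI)
  have "(\<Sum>\<^sub>\<infinity>x. (cmod (g x))\<^sup>2) = (\<Sum>\<^sub>\<infinity>x\<in>A. (cmod (g x))\<^sup>2)"
    by (rule infsum_cong_neutral) (use assms in auto)
  then show "norm2 g = sqrt (\<Sum>x\<in>A. (cmod (g x))^2)" using assms by (simp add: norm2_def)
qed

lemma norm2_indicator: "norm2 (indicator {y} :: 'a \<Rightarrow> complex) = 1" "(indicator {y} :: 'a \<Rightarrow> complex) \<in> ell2"
  using ell2_fin_supp[of "{y}" "indicator {y} :: 'a \<Rightarrow> complex"] by auto

lemma zero_ell2: "(\<lambda>x. 0::complex) \<in> ell2" "norm2 (\<lambda>x. 0::complex) = 0"
  using ell2_fin_supp[of "{}" "\<lambda>x. 0::complex"] by auto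

lemma mult_ell2:
  fixes g :: "'a \<Rightarrow> complex"
  assumes "g \<in> ell2"
  shows "(\<lambda>x. indicator A x * g x) \<in> ell2" "norm2 (\<lambda>x. indicator A x * g x) \<le> norm2 g"
proof -
  have "(\<Sum>x\<in>F. (cmod (indicator A x * g x))^2) \<le> (norm2 g)^2" if "finite F" for F
  proof -
    have "(\<Sum>x\<in>F. (cmod (indicator A x * g x))^2) \<le> (\<Sum>x\<in>F. (cmod (g x))^2)"
      by (rule sum_mono) (auto simp: indicator_def)
    then show ?thesis using ell2_sum_le[OF assms that] by linarith
  qed
  from ell2_finI[OF this] show "(\<lambda>x. indicator A x * g x) \<in> ell2" "norm2 (\<lambda>x. indicator A x * g x) \<le> norm2 g"
    using norm2_nonneg[of g] by auto
qed

lemma diff_ell2: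
  fixes g h :: "'a \<Rightarrow> complex"
  assumes "g \<in> ell2" "h \<in> ell2"
  shows "(\<lambda>x. g x - h x) \<in> ell2" "norm2 (\<lambda>x. g x - h x) \<le> sqrt (2 * (norm2 g)^2 + 2 * (norm2 h)^2)"
proof -
  have "(\<Sum>x\<in>F. (cmod (g x - h x))^2) \<le> 2 * (norm2 g)^2 + 2 * (norm2 h)^2" if "finite F" for F
  proof -
    have "(\<Sum>x\<in>F. (cmod (g x - h x))^2) \<le> (\<Sum>x\<in>F. 2 * (cmod (g x))^2 + 2 * (cmod (h x))^2)"
    proof (rule sum_mono)
      fix x
      have "cmod (g x - h x) \<le> cmod (g x) + cmod (h x)" by (rule norm_triangle_ineq4)
      then have "(cmod (g x - h x))^2 \<le> (cmod (g x) + cmod (h x))^2"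
        by (simp add: power_mono)
      also have "\<dots> \<le> 2 * (cmod (g x))^2 + 2 * (cmod (h x))^2"
        using sum_squares_bound[of "cmod (g x)" "cmod (h x)"] by (simp add: power2_eq_square algebra_simps)
      finally show "(cmod (g x - h x))^2 \<le> 2 * (cmod (g x))^2 + 2 * (cmod (h x))^2" .
    qed
    also have "\<dots> = 2 * (\<Sum>x\<in>F. (cmod (g x))^2) + 2 * (\<Sum>x\<in>F. (cmod (h x))^2)"
      by (simp add: sum.distrib sum_distrib_left)
    finally show ?thesis using ell2_sum_le[OF assms(1) that] ell2_sum_le[OF assms(2) that] by linarith
  qed
  from ell2_finI[OF this] show "(\<lambda>x. g x - h x) \<in> ell2" "norm2 (\<lambda>x. g x - h x) \<le> sqrt (2 * (norm2 g)^2 + 2 * (norm2 h)^2)"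
    by auto
qed


lemma cs_sum:
  fixes b :: "'b \<Rightarrow> real"
  assumes "finite S"
  shows "(\<Sum>y\<in>S. b y)^2 \<le> real (card S) * (\<Sum>y\<in>S. (b y)^2)"
proof -
  have "(\<Sum>y\<in>S. b y)^2 = (\<Sum>y\<in>S. \<Sum>z\<in>S. b y * b z)"
    by (simp add: power2_eq_square sum_product)
  also have "\<dots> \<le> (\<Sum>y\<in>S. \<Sum>z\<in>S. ((b y)^2 + (b z)^2)/2)"
  proof (intro sum_mono)
    fix y z
    have "0 \<le> (b y - b z)^2" by simp
    then show "b y * b z \<le> ((b y)^2 + (b z)^2)/2" by (simp add: power2_eq_square algebra_simps)
  qed
  also have "\<dots> = real (card S) * (\<Sum>y\<in>S. (b y)^2)"
    by (simp add: sum.distrib add_divide_distrib sum_divide_distrib[symmetric] sum_distrib_left[symmetric] sum.swap[of _ S S] )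
  finally show ?thesis .
qed

definition opset :: "(('a \<Rightarrow> complex) \<Rightarrow> ('a \<Rightarrow> complex)) \<Rightarrow> real set" where
  "opset S = {norm2 (S f) | f. f \<in> ell2 \<and> norm2 f \<le> 1}"

lemma opnorm_ge:
  assumes "bdd_above (opset S)" "f \<in> ell2" "norm2 f \<le> 1"
  shows "norm2 (S f) \<le> opnorm S"
  unfolding opnorm_def using assms unfolding opset_def by (intro cSup_upper) auto

lemma opnorm_le:
  assumes "\<And>f. f \<in> ell2 \<Longrightarrow> norm2 f \<le> 1 \<Longrightarrow> norm2 (S f) \<le> c"
  shows "opnorm S \<le> c"
proof -
  have z: "(\<lambda>x::'a. 0::complex) \<in> ell2 \<and> norm2 (\<lambda>x::'a. 0::complex) \<le> 1" by (simp add: zero_ell2)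
  have "norm2 (S (\<lambda>x. 0)) \<in> {norm2 (S f) |f. f \<in> ell2 \<and> norm2 f \<le> 1}" using z by blast
  then show ?thesis unfolding opnorm_def using assms by (intro cSup_least) auto
qed

lemma opset_bdd:
  assumes "\<And>f. f \<in> ell2 \<Longrightarrow> norm2 (S f) \<le> C * norm2 f"
  shows "bdd_above (opset S)"
proof (rule bdd_aboveI[where M="max C 0"])
  fix v assume "v \<in> opset S"
  then obtain f where f: "f \<in> ell2" "norm2 f \<le> 1" "v = norm2 (S f)" by (auto simp: opset_def)
  have "C * norm2 f \<le> max C 0 * norm2 f" using norm2_nonneg[of f] by (intro mult_right_mono) auto
  also have "\<dots> \<le> max C 0" using f(2) norm2_nonneg[of f] by (simp add: mult_left_le)
  finally show "v \<le> max C 0" using assms[OF f(1)] f(3) by linarith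
qed

lemma opnorm_pt:
  assumes "bdd_above (opset S)" "f \<in> ell2" "norm2 f \<le> 1" "S f \<in> ell2"
  shows "cmod (S f x) \<le> opnorm S"
  using ell2_pt_le[OF assms(4), of x] opnorm_ge[OF assms(1-3)] by linarith

lemma Op_fin:
  assumes "finite B" "\<And>y. y \<notin> B \<Longrightarrow> k x y * f y = 0"
  shows "Op k f x = (\<Sum>y\<in>B. k x y * f y)"
proof -
  have "Op k f x = (\<Sum>\<^sub>\<infinity>y\<in>B. k x y * f y)" unfolding Op_def
    by (rule infsum_cong_neutral) (use assms in auto)
  then show ?thesis using assms by simp
qed

lemma Op_bounded:
  fixes k :: "'a \<Rightarrow> 'a \<Rightarrow> complex"
  assumes md: "metric_on d" and bg: "\<And>x. finite (cball_d d x r0) \<and> card (cball_d d x r0) \<le> N"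
    and kc: "\<And>x y. d x y > r0 \<Longrightarrow> k x y = 0" and kb: "\<And>x y. cmod (k x y) \<le> M"
    and f: "f \<in> ell2"
  shows "Op k f \<in> ell2" "norm2 (Op k f) \<le> M * real N * norm2 f"
proof -
  define B where "B x = cball_d d x r0" for x
  have finB: "finite (B x)" for x using bg by (simp add: B_def)
  have cardB: "card (B x) \<le> N" for x using bg by (simp add: B_def)
  have Opx: "Op k f x = (\<Sum>y\<in>B x. k x y * f y)" for x
    by (rule Op_fin) (use finB kc in \<open>auto simp: B_def cball_d_def\<close>)
  have M0: "0 \<le> M" using kb[of undefined undefined] by (meson norm_ge_zero order_trans)
  have est: "(\<Sum>x\<in>A. (cmod (Op k f x))^2) \<le> (M * real N)^2 * (norm2 f)^2" if A: "finite A" for A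
  proof -
    have px: "(cmod (Op k f x))^2 \<le> M^2 * real N * (\<Sum>y\<in>B x. (cmod (f y))^2)" for x
    proof -
      have "cmod (Op k f x) \<le> (\<Sum>y\<in>B x. cmod (k x y * f y))" unfolding Opx by (rule norm_sum)
      also have "\<dots> \<le> (\<Sum>y\<in>B x. M * cmod (f y))"
        by (rule sum_mono) (simp add: norm_mult kb mult_right_mono)
      finally have "(cmod (Op k f x))^2 \<le> (\<Sum>y\<in>B x. M * cmod (f y))^2"
        by (simp add: power_mono)
      also have "\<dots> = M^2 * (\<Sum>y\<in>B x. cmod (f y))^2"
        by (simp add: sum_distrib_left[symmetric] power_mult_distrib)
      also have "\<dots> \<le> M^2 * (real (card (B x)) * (\<Sum>y\<in>B x. (cmod (f y))^2))"
        by (rule mult_left_mono[OF cs_sum[OF finB]]) simp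
      also have "\<dots> \<le> M^2 * (real N * (\<Sum>y\<in>B x. (cmod (f y))^2))"
        using cardB[of x] by (intro mult_left_mono mult_right_mono) (auto simp: sum_nonneg)
      finally show ?thesis by simp
    qed
    define U where "U = (\<Union>x\<in>A. B x)"
    have finU: "finite U" using A finB by (simp add: U_def)
    have "(\<Sum>x\<in>A. (\<Sum>y\<in>B x. (cmod (f y))^2)) = (\<Sum>x\<in>A. \<Sum>y\<in>U. if d x y \<le> r0 then (cmod (f y))^2 else 0)"
    proof (rule sum.cong[OF refl])
      fix x assume "x \<in> A"
      then have "B x = {y\<in>U. d x y \<le> r0}" by (auto simp: U_def B_def cball_d_def)
      then show "(\<Sum>y\<in>B x. (cmod (f y))^2) = (\<Sum>y\<in>U. if d x y \<le> r0 then (cmod (f y))^2 else 0)"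
        using sum.inter_filter[OF finU] by simp
    qed
    also have "\<dots> = (\<Sum>y\<in>U. \<Sum>x\<in>A. if d x y \<le> r0 then (cmod (f y))^2 else 0)"
      by (rule sum.swap)
    also have "\<dots> = (\<Sum>y\<in>U. real (card {x\<in>A. d x y \<le> r0}) * (cmod (f y))^2)"
      by (rule sum.cong[OF refl]) (simp add: sum.inter_filter[OF A, symmetric])
    also have "\<dots> \<le> (\<Sum>y\<in>U. real N * (cmod (f y))^2)"
    proof (rule sum_mono)
      fix y
      have "{x\<in>A. d x y \<le> r0} \<subseteq> B y" using md by (auto simp: B_def cball_d_def metric_on_def)
      then have "card {x\<in>A. d x y \<le> r0} \<le> N" using card_mono[OF finB] cardB[of y] by (meson le_trans)
      then show "real (card {x\<in>A. d x y \<le> r0}) * (cmod (f y))^2 \<le> real N * (cmod (f y))^2"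
        by (intro mult_right_mono) auto
    qed
    also have "\<dots> = real N * (\<Sum>y\<in>U. (cmod (f y))^2)" by (simp add: sum_distrib_left)
    also have "\<dots> \<le> real N * (norm2 f)^2" by (intro mult_left_mono ell2_sum_le[OF f finU]) auto
    finally have SS: "(\<Sum>x\<in>A. (\<Sum>y\<in>B x. (cmod (f y))^2)) \<le> real N * (norm2 f)^2" .
    have "(\<Sum>x\<in>A. (cmod (Op k f x))^2) \<le> (\<Sum>x\<in>A. M^2 * real N * (\<Sum>y\<in>B x. (cmod (f y))^2))"
      by (rule sum_mono[OF px])
    also have "\<dots> = M^2 * real N * (\<Sum>x\<in>A. (\<Sum>y\<in>B x. (cmod (f y))^2))" by (simp add: sum_distrib_left)
    also have "\<dots> \<le> M^2 * real N * (real N * (norm2 f)^2)"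
      by (intro mult_left_mono SS) auto
    finally show ?thesis by (simp add: power2_eq_square algebra_simps)
  qed
  from ell2_finI[OF est] show "Op k f \<in> ell2" "norm2 (Op k f) \<le> M * real N * norm2 f"
    using M0 norm2_nonneg[of f] by (auto simp: real_sqrt_mult)
qed


lemma Op_ind: "Op k (indicator {y}) x = k x y"
  using Op_fin[where B="{y}" and k=k and f="indicator {y}" and x=x] by simp

lemma bop_add:
  assumes "bounded_op T" "f \<in> ell2" "g \<in> ell2"
  shows "T (\<lambda>x. f x + g x) = (\<lambda>x. T f x + T g x)"
  using assms unfolding bounded_op_def by blast

lemma bop_scale:
  assumes "bounded_op T" "f \<in> ell2"
  shows "T (\<lambda>x. c * f x) = (\<lambda>x. c * T f x)"
  using assms unfolding bounded_op_def by blast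

lemma T_zero:
  fixes T :: "('a \<Rightarrow> complex) \<Rightarrow> ('a \<Rightarrow> complex)"
  assumes "bounded_op T"
  shows "T (\<lambda>z. 0) = (\<lambda>x. 0)"
proof -
  have z: "(\<lambda>z::'a. 0::complex) \<in> ell2" by (simp add: zero_ell2)
  have "T (\<lambda>z. 0 * (0::complex)) = (\<lambda>x. 0 * T (\<lambda>z. 0) x)"
    by (rule bop_scale[OF assms z])
  then show ?thesis by simp
qed

lemma T_finsum:
  assumes T: "bounded_op T" and B: "finite B"
  shows "T (\<lambda>z. \<Sum>y\<in>B. f y * indicator {y} z) = (\<lambda>x. \<Sum>y\<in>B. f y * coeff T x y)"
  using B
proof (induction B rule: finite_induct)
  case empty
  then show ?case using T_zero[OF T] by simp
next
  case (insert a F)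
  have e1: "(\<lambda>z. f a * indicator {a} z) \<in> ell2"
    by (rule ell2_fin_supp[of "{a}"]) auto
  have e2: "(\<lambda>z. \<Sum>y\<in>F. f y * indicator {y} z) \<in> ell2"
    by (rule ell2_fin_supp[OF insert(1)]) (auto simp: indicator_def intro!: sum.neutral)
  have add: "T (\<lambda>z. (f a * indicator {a} z) + (\<Sum>y\<in>F. f y * indicator {y} z))
      = (\<lambda>x. T (\<lambda>z. f a * indicator {a} z) x + T (\<lambda>z. \<Sum>y\<in>F. f y * indicator {y} z) x)"
    by (rule bop_add[OF T e1 e2])
  have sc: "T (\<lambda>z. f a * indicator {a} z) = (\<lambda>x. f a * T (indicator {a}) x)"
    using bop_scale[OF T norm2_indicator(2)[of a]] by (simp add: indicator_def)
  have eq: "(\<lambda>z. \<Sum>y\<in>insert a F. f y * indicator {y} z) = (\<lambda>z. (f a * indicator {a} z) + (\<Sum>y\<in>F. f y * indicator {y} z))"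
    using sum.insert[OF insert(1,2), where g="\<lambda>y. f y * indicator {y} z" for z] by simp
  show ?case unfolding eq add sc insert.IH using insert(1,2) by (simp add: coeff_def)
qed

lemma approx:
  fixes T :: "('a \<Rightarrow> complex) \<Rightarrow> ('a \<Rightarrow> complex)"
  assumes md: "metric_on d" and bg: "bounded_geometry d" and TE: "T \<in> E_alg d" and e: "e > 0"
  obtains k r0 N where "r0 > 0" "\<And>x. finite (cball_d d x r0) \<and> card (cball_d d x r0) \<le> N"
    "\<And>x y. d x y > r0 \<Longrightarrow> k x y = 0"
    "bdd_above (opset (\<lambda>f x. T f x - Op k f x))" "opnorm (\<lambda>f x. T f x - Op k f x) < e"
    "\<And>f. f \<in> ell2 \<Longrightarrow> (\<lambda>x. T f x - Op k f x) \<in> ell2"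
proof -
  have Tb: "bounded_op T" using TE by (simp add: E_alg_def)
  from TE e obtain k where kb: "bounded_kernel k" and kc: "controlled_kernel d k"
    and kn: "opnorm (\<lambda>f x. T f x - Op k f x) < e"
    unfolding E_alg_def by blast
  from kb obtain M where M: "\<And>x y. cmod (k x y) \<le> M" by (auto simp: bounded_kernel_def)
  from kc obtain r where r: "\<And>x y. d x y > r \<Longrightarrow> k x y = 0" by (auto simp: controlled_kernel_def)
  define r0 where "r0 = max r 1"
  have r0: "r0 > 0" by (simp add: r0_def)
  from bg r0 obtain N where N: "\<And>x. finite (cball_d d x r0) \<and> card (cball_d d x r0) \<le> N"
    unfolding bounded_geometry_def by blast
  have kc0: "\<And>x y. d x y > r0 \<Longrightarrow> k x y = 0" using r by (simp add: r0_def)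
  from Tb obtain C where C: "\<And>f. f \<in> ell2 \<Longrightarrow> norm2 (T f) \<le> C * norm2 f"
    and Tl: "\<And>f. f \<in> ell2 \<Longrightarrow> T f \<in> ell2"
    unfolding bounded_op_def by blast
  have ops: "Op k f \<in> ell2" "norm2 (Op k f) \<le> M * real N * norm2 f" if "f \<in> ell2" for f
    using Op_bounded[OF md N kc0 M that] by auto
  have inl: "(\<lambda>x. T f x - Op k f x) \<in> ell2" if "f \<in> ell2" for f
    using diff_ell2(1)[OF Tl[OF that] ops(1)[OF that]] .
  have "bdd_above (opset (\<lambda>f x. T f x - Op k f x))"
  proof (rule bdd_aboveI[where M="sqrt (2 * (abs C)^2 + 2 * (abs (M * real N))^2)"])
    fix v assume "v \<in> opset (\<lambda>f x. T f x - Op k f x)"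
    then obtain f where f: "f \<in> ell2" "norm2 f \<le> 1" "v = norm2 (\<lambda>x. T f x - Op k f x)"
      by (auto simp: opset_def)
    have n0: "0 \<le> norm2 f" by (rule norm2_nonneg)
    have a: "norm2 (T f) \<le> abs C"
    proof -
      have "C * norm2 f \<le> abs C * norm2 f" using n0 by (intro mult_right_mono) auto
      also have "\<dots> \<le> abs C" using f(2) n0 by (simp add: mult_left_le)
      finally show ?thesis using C[OF f(1)] by linarith
    qed
    have b: "norm2 (Op k f) \<le> abs (M * real N)"
    proof -
      have "M * real N * norm2 f \<le> abs (M * real N) * norm2 f" using n0 by (intro mult_right_mono) auto
      also have "\<dots> \<le> abs (M * real N)" using f(2) n0 by (simp add: mult_left_le)
      finally show ?thesis using ops(2)[OF f(1)] by linarith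
    qed
    have "(norm2 (T f))^2 \<le> (abs C)^2" using power_mono[OF a norm2_nonneg[of "T f"], of 2] by simp
    moreover have "(norm2 (Op k f))^2 \<le> (abs (M * real N))^2" using power_mono[OF b norm2_nonneg[of "Op k f"], of 2] by simp
    ultimately have "sqrt (2 * (norm2 (T f))^2 + 2 * (norm2 (Op k f))^2) \<le> sqrt (2 * (abs C)^2 + 2 * (abs (M * real N))^2)"
      by simp
    then show "v \<le> sqrt (2 * (abs C)^2 + 2 * (abs (M * real N))^2)"
      using diff_ell2(2)[OF Tl[OF f(1)] ops(1)[OF f(1)]] f(3) by linarith
  qed
  then show ?thesis using that[OF r0 N kc0 _ kn inl] by blast
qed


definition supc :: "(('a \<Rightarrow> complex) \<Rightarrow> ('a \<Rightarrow> complex)) \<Rightarrow> ('a \<Rightarrow> 'a \<Rightarrow> real) \<Rightarrow> 'a \<Rightarrow> real \<Rightarrow> real" where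
  "supc T d x r = (SUP p\<in>cball_d d x r \<times> cball_d d x r. cmod (coeff T (fst p) (snd p)))"

lemma center_in: "metric_on d \<Longrightarrow> r \<ge> 0 \<Longrightarrow> x \<in> cball_d d x r"
  unfolding cball_d_def metric_on_def by (metis mem_Collect_eq)

lemma supc_ge:
  assumes "finite (cball_d d x r)" "y \<in> cball_d d x r" "z \<in> cball_d d x r"
  shows "cmod (coeff T y z) \<le> supc T d x r"
  unfolding supc_def
  by (rule cSUP_upper2[where x="(y,z)"]) (use assms in \<open>auto intro!: bdd_above_finite\<close>)

lemma supc_nonneg:
  assumes "metric_on d" "r \<ge> 0" "finite (cball_d d x r)"
  shows "0 \<le> supc T d x r"
  using supc_ge[OF assms(3) center_in[OF assms(1,2)] center_in[OF assms(1,2)], of T] norm_ge_zero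
  by (meson order_trans)

lemma supc_le:
  assumes "metric_on d" "r \<ge> 0" "\<And>y z. y \<in> cball_d d x r \<Longrightarrow> z \<in> cball_d d x r \<Longrightarrow> cmod (coeff T y z) \<le> c"
  shows "supc T d x r \<le> c"
  unfolding supc_def using assms center_in[OF assms(1,2)] by (intro cSUP_least) auto

lemma mult_op_bdd:
  assumes T: "bounded_op T"
  shows "bdd_above (opset (mult_op B T))" "\<And>f. f \<in> ell2 \<Longrightarrow> mult_op B T f \<in> ell2"
proof -
  from T obtain C where C: "\<And>f. f \<in> ell2 \<Longrightarrow> norm2 (T f) \<le> C * norm2 f"
    and Tl: "\<And>f. f \<in> ell2 \<Longrightarrow> T f \<in> ell2"
    unfolding bounded_op_def by blast
  show "bdd_above (opset (mult_op B T))"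
  proof (rule opset_bdd[where C=C])
    fix f :: "'a \<Rightarrow> complex" assume f: "f \<in> ell2"
    show "norm2 (mult_op B T f) \<le> C * norm2 f"
      using mult_ell2(2)[OF Tl[OF f], of B] C[OF f] by (simp add: mult_op_def)
  qed
  show "\<And>f. f \<in> ell2 \<Longrightarrow> mult_op B T f \<in> ell2"
    using mult_ell2(1)[OF Tl] by (simp add: mult_op_def)
qed

lemma supc_le_opnorm:
  assumes md: "metric_on d" and T: "bounded_op T" and fin: "finite (cball_d d x r)" and r: "r \<ge> 0"
  shows "supc T d x r \<le> opnorm (mult_op (cball_d d x r) T)"
proof (rule supc_le[OF md r])
  fix y z assume y: "y \<in> cball_d d x r" and z: "z \<in> cball_d d x r"
  have "coeff T y z = mult_op (cball_d d x r) T (indicator {z}) y"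
    using y by (simp add: mult_op_def coeff_def)
  also have "cmod \<dots> \<le> opnorm (mult_op (cball_d d x r) T)"
    by (rule opnorm_pt[OF mult_op_bdd(1)[OF T] norm2_indicator(2)]) (auto simp: norm2_indicator mult_op_bdd(2)[OF T])
  finally show "cmod (coeff T y z) \<le> opnorm (mult_op (cball_d d x r) T)" .
qed

lemma opnorm_nonneg:
  fixes S :: "('a \<Rightarrow> complex) \<Rightarrow> ('a \<Rightarrow> complex)"
  assumes "bdd_above (opset S)"
  shows "0 \<le> opnorm S"
proof -
  have z: "(\<lambda>x::'a. 0::complex) \<in> ell2 \<and> norm2 (\<lambda>x::'a. 0::complex) \<le> 1" by (simp add: zero_ell2)
  then show ?thesis using opnorm_ge[OF assms, of "\<lambda>x. 0"] norm2_nonneg[of "S (\<lambda>x. 0)"] by linarith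
qed


lemma sum_ind_eq: "(\<Sum>y\<in>B. f y * indicator {y} z) = (if z \<in> B then f z else (0::complex))" if "finite B"
proof -
  have "(\<Sum>y\<in>B. f y * indicator {y} z) = (\<Sum>y\<in>B. if y = z then f y else 0)"
    by (rule sum.cong) (auto simp: indicator_def)
  also have "\<dots> = (if z \<in> B then f z else 0)" using that by (simp add: sum.delta')
  finally show ?thesis .
qed

lemma pt_bound:
  fixes T :: "('a \<Rightarrow> complex) \<Rightarrow> ('a \<Rightarrow> complex)"
  assumes md: "metric_on d" and T: "bounded_op T" and r0: "r0 > 0"
    and N': "\<And>x. finite (cball_d d x r0) \<and> card (cball_d d x r0) \<le> N'"
    and kc: "\<And>x y. d x y > r0 \<Longrightarrow> k x y = 0"
    and Sb: "bdd_above (opset (\<lambda>f x. T f x - Op k f x))"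
    and Sin: "\<And>f. f \<in> ell2 \<Longrightarrow> (\<lambda>x. T f x - Op k f x) \<in> ell2"
    and r: "r \<ge> 0" and fin2: "finite (cball_d d x0 (r + r0))"
    and x: "x \<in> cball_d d x0 r" and f: "f \<in> ell2" "norm2 f \<le> 1"
  shows "cmod (T f x) \<le> opnorm (\<lambda>f x. T f x - Op k f x) + real N' * supc T d x0 (r + r0)"
proof -
  define Bx where "Bx = cball_d d x r0"
  define m where "m = supc T d x0 (r + r0)"
  have finB: "finite Bx" using N' by (simp add: Bx_def)
  define g1 where "g1 = (\<lambda>z. \<Sum>y\<in>Bx. f y * indicator {y} z)"
  define g2 where "g2 = (\<lambda>z. indicator (- Bx) z * f z)"
  have g1e: "g1 \<in> ell2" unfolding g1_def
    by (rule ell2_fin_supp[OF finB]) (simp add: sum_ind_eq[OF finB])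
  have g2e: "g2 \<in> ell2" "norm2 g2 \<le> norm2 f" unfolding g2_def using mult_ell2[OF f(1)] by auto
  have fg: "f = (\<lambda>z. g1 z + g2 z)"
  proof (rule ext)
    fix z show "f z = g1 z + g2 z" unfolding g1_def g2_def sum_ind_eq[OF finB] by (simp add: indicator_def)
  qed
  have Tf: "T f x = T g1 x + T g2 x"
    using bop_add[OF T g1e g2e(1)] fg by metis
  have T1: "T g1 x = (\<Sum>y\<in>Bx. f y * coeff T x y)"
    unfolding g1_def T_finsum[OF T finB] ..
  have Op0: "Op k g2 x = 0"
  proof -
    have "Op k g2 x = (\<Sum>y\<in>Bx. k x y * g2 y)"
      by (rule Op_fin[OF finB]) (auto simp: Bx_def cball_d_def kc)
    also have "\<dots> = 0" by (simp add: g2_def)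
    finally show ?thesis .
  qed
  have T2: "cmod (T g2 x) \<le> opnorm (\<lambda>f x. T f x - Op k f x)"
  proof -
    have "cmod ((\<lambda>x. T g2 x - Op k g2 x) x) \<le> opnorm (\<lambda>f x. T f x - Op k f x)"
      by (rule opnorm_pt[OF Sb g2e(1) _ Sin[OF g2e(1)]]) (use g2e(2) f(2) in linarith)
    then show ?thesis using Op0 by simp
  qed
  have "cmod (\<Sum>y\<in>Bx. f y * coeff T x y) \<le> (\<Sum>y\<in>Bx. cmod (f y * coeff T x y))" by (rule norm_sum)
  also have "\<dots> \<le> (\<Sum>y\<in>Bx. m)"
  proof (rule sum_mono)
    fix y assume y: "y \<in> Bx"
    have "cmod (f y) \<le> 1" using ell2_pt_le[OF f(1), of y] f(2) by linarith
    moreover have "cmod (coeff T x y) \<le> m" unfolding m_def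
    proof (rule supc_ge[OF fin2])
      have dx: "d x0 x \<le> r" using x by (simp add: cball_d_def)
      have dy: "d x y \<le> r0" using y by (simp add: Bx_def cball_d_def)
      have tri: "\<forall>x y z. d x z \<le> d x y + d y z" using md by (simp add: metric_on_def)
      have "d x0 y \<le> d x0 x + d x y" using tri by blast
      then show "y \<in> cball_d d x0 (r + r0)" using dx dy by (simp add: cball_d_def)
      show "x \<in> cball_d d x0 (r + r0)" using dx r0 by (simp add: cball_d_def)
    qed
    ultimately show "cmod (f y * coeff T x y) \<le> m"
      using mult_mono[of "cmod (f y)" 1 "cmod (coeff T x y)" m] by (simp add: norm_mult)
  qed
  also have "\<dots> = real (card Bx) * m" by simp
  also have "\<dots> \<le> real N' * m"
    using N'[of x] supc_nonneg[OF md _ fin2, of T] r r0 by (intro mult_right_mono) (auto simp: Bx_def m_def)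
  finally have "cmod (T g1 x) \<le> real N' * m" unfolding T1 .
  then show ?thesis unfolding Tf m_def using T2 norm_triangle_ineq[of "T g1 x" "T g2 x"] by linarith
qed


lemma opnorm_mult_bound:
  fixes T :: "('a \<Rightarrow> complex) \<Rightarrow> ('a \<Rightarrow> complex)"
  assumes md: "metric_on d" and T: "bounded_op T" and r0: "r0 > 0"
    and N': "\<And>x. finite (cball_d d x r0) \<and> card (cball_d d x r0) \<le> N'"
    and kc: "\<And>x y. d x y > r0 \<Longrightarrow> k x y = 0"
    and Sb: "bdd_above (opset (\<lambda>f x. T f x - Op k f x))"
    and Sin: "\<And>f. f \<in> ell2 \<Longrightarrow> (\<lambda>x. T f x - Op k f x) \<in> ell2"
    and r: "r \<ge> 0" and fin2: "finite (cball_d d x0 (r + r0))"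
    and fin: "finite (cball_d d x0 r)" and cN: "card (cball_d d x0 r) \<le> N"
  shows "opnorm (mult_op (cball_d d x0 r) T) \<le> sqrt (real N) * (opnorm (\<lambda>f x. T f x - Op k f x) + real N' * supc T d x0 (r + r0))"
proof (rule opnorm_le)
  define c where "c = opnorm (\<lambda>f x. T f x - Op k f x) + real N' * supc T d x0 (r + r0)"
  define B where "B = cball_d d x0 r"
  have c0: "0 \<le> c" unfolding c_def
    using opnorm_nonneg[OF Sb] supc_nonneg[OF md _ fin2, of T] r r0 by simp
  fix f :: "'a \<Rightarrow> complex" assume f: "f \<in> ell2" "norm2 f \<le> 1"
  have "norm2 (mult_op B T f) = sqrt (\<Sum>x\<in>B. (cmod (mult_op B T f x))^2)"
    by (rule ell2_fin_supp(2)) (use fin in \<open>auto simp: B_def mult_op_def\<close>)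
  also have "\<dots> \<le> sqrt (\<Sum>x\<in>B. c^2)"
  proof (rule real_sqrt_le_mono, rule sum_mono)
    fix x assume x: "x \<in> B"
    have xB: "x \<in> cball_d d x0 r" using x unfolding B_def .
    have "cmod (T f x) \<le> c" unfolding c_def
      by (rule pt_bound[OF md T r0 N' kc Sb Sin r fin2 xB f])
    then have "cmod (mult_op B T f x) \<le> c" using x by (simp add: mult_op_def)
    then show "(cmod (mult_op B T f x))^2 \<le> c^2" by (simp add: power_mono)
  qed
  also have "\<dots> = sqrt (real (card B)) * c" using c0 by (simp add: real_sqrt_mult)
  also have "\<dots> \<le> sqrt (real N) * c" using cN c0 by (intro mult_right_mono) (auto simp: B_def)
  finally show "norm2 (mult_op (cball_d d x0 r) T f) \<le> sqrt (real N) * (opnorm (\<lambda>f x. T f x - Op k f x) + real N' * supc T d x0 (r + r0))"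
    by (simp add: B_def c_def)
qed

lemma part1:
  fixes T :: "('a \<Rightarrow> complex) \<Rightarrow> ('a \<Rightarrow> complex)"
  assumes md: "metric_on d" and bg: "bounded_geometry d" and TE: "T \<in> E_alg d"
  shows "T \<in> G_alg d \<xi> \<longleftrightarrow> (\<forall>r>0. ((\<lambda>x. supc T d x r) \<longlongrightarrow> 0) \<xi>)"
proof -
  have T: "bounded_op T" using TE by (simp add: E_alg_def)
  have finb: "\<exists>N. \<forall>x. finite (cball_d d x r) \<and> card (cball_d d x r) \<le> N" if "r > 0" for r
    using bg that unfolding bounded_geometry_def by blast
  show ?thesis
  proof
    assume G: "T \<in> G_alg d \<xi>"
    show "\<forall>r>0. ((\<lambda>x. supc T d x r) \<longlongrightarrow> 0) \<xi>"
    proof (intro allI impI)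
      fix r :: real assume r: "r > 0"
      then obtain N where N: "\<And>x. finite (cball_d d x r) \<and> card (cball_d d x r) \<le> N" using finb by blast
      have lim: "((\<lambda>x. opnorm (mult_op (cball_d d x r) T)) \<longlongrightarrow> 0) \<xi>" using G r by (simp add: G_alg_def)
      show "((\<lambda>x. supc T d x r) \<longlongrightarrow> 0) \<xi>"
        by (rule tendsto_sandwich[OF _ _ tendsto_const lim])
           (use supc_nonneg[OF md] supc_le_opnorm[OF md T] N r in \<open>auto intro!: always_eventually\<close>)
    qed
  next
    assume H: "\<forall>r>0. ((\<lambda>x. supc T d x r) \<longlongrightarrow> 0) \<xi>"
    have "((\<lambda>x. opnorm (mult_op (cball_d d x r) T)) \<longlongrightarrow> 0) \<xi>" if r: "r > 0" for r
    proof (rule tendstoI)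
      fix \<epsilon> :: real assume eps: "\<epsilon> > 0"
      obtain N where N: "\<And>x. finite (cball_d d x r) \<and> card (cball_d d x r) \<le> N" using finb[OF r] by blast
      define e where "e = \<epsilon> / (2 * (sqrt (real N) + 1))"
      have sq0: "0 \<le> sqrt (real N)" by simp
      have d0: "0 < 2 * (sqrt (real N) + 1)" by (simp add: add_nonneg_pos)
      have e: "e > 0" unfolding e_def using eps d0 by (rule divide_pos_pos)
      obtain k r0 N' where r0: "r0 > 0" and N': "\<And>x. finite (cball_d d x r0) \<and> card (cball_d d x r0) \<le> N'"
        and kc: "\<And>x y. d x y > r0 \<Longrightarrow> k x y = 0"
        and Sb: "bdd_above (opset (\<lambda>f x. T f x - Op k f x))" and Sn: "opnorm (\<lambda>f x. T f x - Op k f x) < e"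
        and Sin: "\<And>f. f \<in> ell2 \<Longrightarrow> (\<lambda>x. T f x - Op k f x) \<in> ell2"
        by (rule approx[OF md bg TE e], rule that, assumption+)
      obtain N2 where N2: "\<And>x. finite (cball_d d x (r + r0)) \<and> card (cball_d d x (r + r0)) \<le> N2"
        using finb[of "r + r0"] r r0 by auto
      have e2: "e / (real N' + 1) > 0" using e by simp
      have ev: "eventually (\<lambda>x. dist (supc T d x (r + r0)) 0 < e / (real N' + 1)) \<xi>"
        using tendstoD[OF H[rule_format, of "r + r0"] e2] r r0 by simp
      show "eventually (\<lambda>x. dist (opnorm (mult_op (cball_d d x r) T)) 0 < \<epsilon>) \<xi>"
      proof (rule eventually_mono[OF ev])
        fix x assume hx: "dist (supc T d x (r + r0)) 0 < e / (real N' + 1)"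
        define m where "m = supc T d x (r + r0)"
        have m0: "0 \<le> m" unfolding m_def using supc_nonneg[OF md _ conjunct1[OF N2[of x]]] r r0 by simp
        have mle: "m < e / (real N' + 1)" using hx m0 by (simp add: m_def dist_real_def)
        have "real N' * m \<le> real N' * (e / (real N' + 1))" using mle by (intro mult_left_mono) auto
        also have "\<dots> \<le> e" using e by (simp add: field_simps)
        finally have Nm: "real N' * m \<le> e" .
        have ub: "opnorm (mult_op (cball_d d x r) T) \<le> sqrt (real N) * (opnorm (\<lambda>f x. T f x - Op k f x) + real N' * m)"
          unfolding m_def
          by (rule opnorm_mult_bound[OF md T r0 N' kc Sb Sin]) (use r N N2 in auto)
        also have "\<dots> \<le> sqrt (real N) * (2 * e)" using Sn Nm by (intro mult_left_mono) auto
        also have "\<dots> < \<epsilon>"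
        proof -
          have "sqrt (real N) * (2 * e) = \<epsilon> * (sqrt (real N) / (sqrt (real N) + 1))"
          proof -
            have p: "sqrt (real N) + 1 > 0" by (simp add: add_nonneg_pos)
            show ?thesis using p unfolding e_def by (simp add: field_simps)
          qed
          also have "\<dots> < \<epsilon> * 1" using eps by (intro mult_strict_left_mono) (auto simp: add_nonneg_pos)
          finally show ?thesis by simp
        qed
        finally have "opnorm (mult_op (cball_d d x r) T) < \<epsilon>" .
        moreover have "0 \<le> opnorm (mult_op (cball_d d x r) T)" by (rule opnorm_nonneg[OF mult_op_bdd(1)[OF T]])
        ultimately show "dist (opnorm (mult_op (cball_d d x r) T)) 0 < \<epsilon>" by (simp add: dist_real_def)
      qed
    qed
    then show "T \<in> G_alg d \<xi>" using TE by (simp add: G_alg_def)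
  qed
qed


theorem proposition5p10:
  fixes d :: "'a \<Rightarrow> 'a \<Rightarrow> real" and \<xi> :: "'a filter"
    and T :: "('a \<Rightarrow> complex) \<Rightarrow> ('a \<Rightarrow> complex)"
  assumes "infinite (UNIV :: 'a set)" and "metric_on d" and "discrete_metric d"
    and "bounded_geometry d" and "T \<in> E_alg d"
  shows "(T \<in> G_alg d \<xi> \<longleftrightarrow>
      (\<forall>r>0. ((\<lambda>x. SUP p\<in>cball_d d x r \<times> cball_d d x r. cmod (coeff T (fst p) (snd p))) \<longlongrightarrow> 0) \<xi>))
    \<and> (coarse_filter d \<xi> \<longrightarrow> G_alg d \<xi> = {S \<in> E_alg d. lim2_zero \<xi> (coeff S)})"
proof -
  note md = assms(2) and bg = assms(4)
  have finb: "\<exists>N. \<forall>x. finite (cball_d d x r) \<and> card (cball_d d x r) \<le> N" if "r > 0" for r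
    using bg that unfolding bounded_geometry_def by blast
  have finc: "finite (cball_d d x r)" if "r > 0" for x r using finb[OF that] by blast
  have c1: "T \<in> G_alg d \<xi> \<longleftrightarrow>
      (\<forall>r>0. ((\<lambda>x. SUP p\<in>cball_d d x r \<times> cball_d d x r. cmod (coeff T (fst p) (snd p))) \<longlongrightarrow> 0) \<xi>)"
    using part1[OF md bg assms(5), of \<xi>] by (simp add: supc_def)
  have c2: "G_alg d \<xi> = {S \<in> E_alg d. lim2_zero \<xi> (coeff S)}" if co: "coarse_filter d \<xi>"
  proof (intro set_eqI iffI)
    fix S assume SG: "S \<in> G_alg d \<xi>"
    have SE: "S \<in> E_alg d" using SG by (simp add: G_alg_def)
    have lim: "\<forall>r>0. ((\<lambda>x. supc S d x r) \<longlongrightarrow> 0) \<xi>" using part1[OF md bg SE] SG by blast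
    have "lim2_zero \<xi> (coeff S)" unfolding lim2_zero_def
    proof (intro allI impI)
      fix e :: real assume e: "e > 0"
      obtain k r0 N' where r0: "r0 > 0" and N': "\<And>x. finite (cball_d d x r0) \<and> card (cball_d d x r0) \<le> N'"
        and kc: "\<And>x y. d x y > r0 \<Longrightarrow> k x y = 0"
        and Sb: "bdd_above (opset (\<lambda>f x. S f x - Op k f x))" and Sn: "opnorm (\<lambda>f x. S f x - Op k f x) < e"
        and Sin: "\<And>f. f \<in> ell2 \<Longrightarrow> (\<lambda>x. S f x - Op k f x) \<in> ell2"
        by (rule approx[OF md bg SE e], rule that, assumption+)
      define F where "F = {x. supc S d x r0 < e}"
      have ev: "eventually (\<lambda>x. dist (supc S d x r0) 0 < e) \<xi>"
        using tendstoD[OF lim[rule_format, OF r0] e] .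
      have evF: "eventually (\<lambda>x. x \<in> F) \<xi>"
        by (rule eventually_mono[OF ev]) (auto simp: F_def dist_real_def)
      have "cmod (coeff S x y) < e" if x: "x \<in> F" and y: "y \<in> F" for x y
      proof (cases "d x y \<le> r0")
        case True
        have "cmod (coeff S x y) \<le> supc S d x r0"
          by (rule supc_ge) (use N' True center_in[OF md, of r0 x] r0 in \<open>auto simp: cball_d_def\<close>)
        then show ?thesis using x by (simp add: F_def)
      next
        case False
        then have k0: "k x y = 0" using kc by simp
        have "cmod ((\<lambda>x. S (indicator {y}) x - Op k (indicator {y}) x) x) \<le> opnorm (\<lambda>f x. S f x - Op k f x)"
          by (rule opnorm_pt[OF Sb norm2_indicator(2) _ Sin[OF norm2_indicator(2)]]) (simp add: norm2_indicator)
        then show ?thesis using Sn k0 by (simp add: Op_ind coeff_def)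
      qed
      then show "\<exists>F. eventually (\<lambda>x. x \<in> F) \<xi> \<and> (\<forall>x\<in>F. \<forall>y\<in>F. cmod (coeff S x y) < e)"
        using evF by blast
    qed
    then show "S \<in> {S \<in> E_alg d. lim2_zero \<xi> (coeff S)}" using SE by simp
  next
    fix S assume "S \<in> {S \<in> E_alg d. lim2_zero \<xi> (coeff S)}"
    then have SE: "S \<in> E_alg d" and L: "lim2_zero \<xi> (coeff S)" by auto
    have "((\<lambda>x. supc S d x r) \<longlongrightarrow> 0) \<xi>" if r: "r > 0" for r
    proof (rule tendstoI)
      fix \<epsilon> :: real assume eps: "\<epsilon> > 0"
      then have "\<epsilon> / 2 > 0" by simp
      then obtain F where evF: "eventually (\<lambda>x. x \<in> F) \<xi>" and Fb: "\<And>x y. x \<in> F \<Longrightarrow> y \<in> F \<Longrightarrow> cmod (coeff S x y) < \<epsilon> / 2"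
        using L unfolding lim2_zero_def by blast
      have evI: "eventually (\<lambda>x. x \<in> interior_r d F r) \<xi>"
        using co evF r unfolding coarse_filter_def by blast
      show "eventually (\<lambda>x. dist (supc S d x r) 0 < \<epsilon>) \<xi>"
      proof (rule eventually_mono[OF evI])
        fix x assume "x \<in> interior_r d F r"
        then obtain s where s: "s > r" "\<And>y. y \<notin> F \<Longrightarrow> d x y \<ge> s" by (auto simp: interior_r_def)
        have sub: "cball_d d x r \<subseteq> F"
        proof
          fix y assume "y \<in> cball_d d x r"
          then have "d x y \<le> r" by (simp add: cball_d_def)
          then show "y \<in> F" using s by force
        qed
        have up: "supc S d x r \<le> \<epsilon> / 2"
        proof (rule supc_le[OF md])
          show "0 \<le> r" using r by simp
          fix y z assume "y \<in> cball_d d x r" "z \<in> cball_d d x r"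
          then have "cmod (coeff S y z) < \<epsilon> / 2" using sub by (intro Fb) auto
          then show "cmod (coeff S y z) \<le> \<epsilon> / 2" by simp
        qed
        have lo: "0 \<le> supc S d x r" by (rule supc_nonneg[OF md _ finc[OF r]]) (use r in simp)
        show "dist (supc S d x r) 0 < \<epsilon>" using up lo eps by (simp add: dist_real_def)
      qed
    qed
    then show "S \<in> G_alg d \<xi>" using part1[OF md bg SE] by blast
  qed
  show ?thesis using c1 c2 by blast
qed

end
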